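(* Let $A\in\mathrm{GL}(n,2)$ have columns $\mathbf{a}_1,\dots,\mathbf{a}_n$, and let $\rho$ be an $n$-qubit density matrix. Define $$F_{\max}(A;\rho):=\max\{\,p(\mathbf{0}) : p\in\Delta(\mathbb{F}_2^n),\ \widehat p(\mathbf{a}_i)=\mu_\rho(\mathbf{a}_i)\ \forall i\in\{1,\dots,n\}\,\}.$$ Then $$F_{\max}(A;\rho)=\frac12+\frac12\min_{i\in\{1,\dots,n\}}\mu_\rho(\mathbf{a}_i).$$
   Context: Setting: $|\psi\rangle$ is an $n$-qubit stabilizer state whose stabilizer group is generated by independent commuting Pauli operators $g_1,\dots,g_n$. For $\mathbf{u}\in\mathbb{F}_2^n$ put $g(\mathbf{u})=\prod_j g_j^{u_j}$. For $\mathbf{s}\in\mathbb{F}_2^n$, the syndrome projectors $\Pi_{\mathbf{s}}=2^{-n}\prod_{j=1}^n(I+(-1)^{s_j}g_j)$ are mutually orthogonal rank-one projectors summing to the identity, with $\Pi_{\mathbf{0}}=|\psi\rangle\langle\psi|$. For a state $\rho$, its syndrome distribution is $p_\rho(\mathbf{s})=\mathrm{tr}(\rho\Pi_{\mathbf{s}})$ and $\mu_\rho(\mathbf{u}):=\mathrm{tr}(\rho\, g(\mathbf{u}))=\widehat{p_\rho}(\mathbf{u})$, where for $p\in\Delta(\mathbb{F}_2^n)$ (probability distributions on $\mathbb{F}_2^n$) the Walsh transform is $\widehat p(\mathbf{u})=\sum_{\mathbf{s}}(-1)^{\mathbf{u}\cdot\mathbf{s}}p(\mathbf{s})$ with $\mathbf{u}\cdot\mathbf{s}$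 the mod-2 inner product. $\mathrm{GL}(n,2)$ is the group of invertible binary $n\times n$ matrices (a "gauge"); querying gauge $A$ yields the exact values $\mu_\rho(\mathbf{a}_1),\dots,\mu_\rho(\mathbf{a}_n)$. *)

theory Defs
  imports Complex_Main
begin

text \<open>Vectors of F_2^n are modelled as subsets of a finite index type 'n (n = CARD('n)):
  a vector u corresponds to its support. Addition is symmetric difference and the mod-2
  inner product u.s is the parity of card (u Int s).\<close>

definition dot2 :: "'n::finite set \<Rightarrow> 'n set \<Rightarrow> bool" where
  "dot2 u s = odd (card (u \<inter> s))"

definition is_dist :: "('n::finite set \<Rightarrow> real) \<Rightarrow> bool" where
  "is_dist p \<longleftrightarrow> (\<forall>s. 0 \<le> p s) \<and> (\<Sum>s\<in>UNIV. p s) = 1"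

definition walsh :: "('n::finite set \<Rightarrow> real) \<Rightarrow> 'n set \<Rightarrow> real" where
  "walsh p u = (\<Sum>s\<in>UNIV. (if dot2 u s then -1 else 1) * p s)"

text \<open>A binary n x n matrix is given by its columns a i (column i has support a i);
  A x = sum_{i in x} a i (mod 2), i.e. entry (j,i) of A is 1 iff j is in a i.\<close>
definition mat_vec2 :: "('n::finite \<Rightarrow> 'n set) \<Rightarrow> 'n set \<Rightarrow> 'n set" where
  "mat_vec2 a x = {j. odd (card {i\<in>x. j \<in> a i})}"

definition in_GL2 :: "('n::finite \<Rightarrow> 'n set) \<Rightarrow> bool" where
  "in_GL2 a \<longleftrightarrow> bij (mat_vec2 a)"

definition Fmax_set :: "('n::finite \<Rightarrow> 'n set) \<Rightarrow> ('n set \<Rightarrow> real) \<Rightarrow> real set" where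
  "Fmax_set a \<mu> = {p {} | p. is_dist p \<and> (\<forall>i. walsh p (a i) = \<mu> (a i))}"

definition is_max :: "real set \<Rightarrow> real \<Rightarrow> bool" where
  "is_max S m \<longleftrightarrow> m \<in> S \<and> (\<forall>x\<in>S. x \<le> m)"

end

theory Submission
  imports Defs
begin

definition flip :: "'a \<Rightarrow> 'a set \<Rightarrow> 'a set" where
  "flip x Y = (if x \<in> Y then Y - {x} else insert x Y)"

lemma flip_flip[simp]: "flip x (flip x Y) = Y"
  unfolding flip_def by auto

lemma sum_flip:
  fixes g :: "'n::finite set \<Rightarrow> real"
  shows "(\<Sum>Y\<in>UNIV. g (flip x Y)) = (\<Sum>Y\<in>UNIV. g Y)"
  by (rule sum.reindex_bij_witness[where i="flip x" and j="flip x"]) auto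

lemma flip_mem: "i \<noteq> x \<Longrightarrow> (i \<in> flip x Y) = (i \<in> Y)"
  unfolding flip_def by auto

lemma threshold:
  fixes r :: "'n::finite \<Rightarrow> real"
  assumes r: "\<And>i. 0 \<le> r i \<and> r i \<le> 1"
  shows "\<exists>p. (\<forall>Y. 0 \<le> p Y) \<and> (\<forall>Y. p Y \<noteq> 0 \<longrightarrow> Y \<subseteq> I) \<and> (\<Sum>Y\<in>UNIV. p Y) = 1
     \<and> (\<forall>i\<in>I. (\<Sum>Y\<in>UNIV. if i \<in> Y then p Y else 0) = r i)
     \<and> (\<forall>i\<in>I. p {} \<le> 1 - r i) \<and> (p {} = 1 \<or> (\<exists>k\<in>I. p {} = 1 - r k))"
proof -
  have fin: "finite I" by simp
  show ?thesis using fin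
  proof (induction I rule: finite_ranking_induct[where f=r])
    case empty
    show ?case
      by (rule exI[where x="\<lambda>Y. if Y = {} then 1 else 0"]) auto
  next
    case (insert x S)
    show ?case
    proof (cases "x \<in> S")
      case True
      then show ?thesis using insert.IH by (simp add: insert_absorb)
    next
      case xS: False
      from insert.IH obtain p where p0: "\<forall>Y. 0 \<le> p Y" and psup: "\<forall>Y. p Y \<noteq> 0 \<longrightarrow> Y \<subseteq> S"
        and psum: "(\<Sum>Y\<in>UNIV. p Y) = 1"
        and pmarg: "\<forall>i\<in>S. (\<Sum>Y\<in>UNIV. if i \<in> Y then p Y else 0) = r i"
        and ple: "\<forall>i\<in>S. p {} \<le> 1 - r i" and pk: "p {} = 1 \<or> (\<exists>k\<in>S. p {} = 1 - r k)"
        by blast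
      have pxz: "x \<in> Z \<Longrightarrow> p Z = 0" for Z using psup xS by blast
      have rx: "1 - p {} \<le> r x"
        using pk insert.hyps(2) r[of x] by auto
      define q where "q Y = p (flip x Y) + (if Y = {} then 1 - r x else 0)
          + (if Y = {x} then r x - 1 else 0)" for Y
      have q0: "0 \<le> q Y" for Y
      proof -
        have "Y = {x} \<Longrightarrow> flip x Y = {}" unfolding flip_def by auto
        then show ?thesis using p0 rx r[of x] unfolding q_def by auto
      qed
      have qsup: "q Y \<noteq> 0 \<longrightarrow> Y \<subseteq> insert x S" for Y
      proof
        assume "q Y \<noteq> 0"
        hence "p (flip x Y) \<noteq> 0 \<or> Y = {} \<or> Y = {x}" unfolding q_def by (auto split: if_splits)
        then show "Y \<subseteq> insert x S"
          using psup unfolding flip_def by (auto split: if_splits)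
      qed
      have qsum: "(\<Sum>Y\<in>UNIV. q Y) = 1"
        unfolding q_def by (simp add: sum.distrib sum_flip psum)
      have qmarg: "(\<Sum>Y\<in>UNIV. if i \<in> Y then q Y else 0) = r i" if i: "i \<in> insert x S" for i
      proof (cases "i = x")
        case True
        have "(\<Sum>Y\<in>UNIV. if i \<in> Y then q Y else 0)
           = (\<Sum>Y\<in>UNIV. (if x \<notin> flip x Y then p (flip x Y) else 0) + (if Y = {x} then r x - 1 else 0))"
          unfolding q_def True by (rule sum.cong) (auto simp: flip_def)
        also have "\<dots> = (\<Sum>Y\<in>UNIV. (if x \<notin> flip x Y then p (flip x Y) else 0)) + (r x - 1)"
          by (simp add: sum.distrib)
        also have "(\<Sum>Y\<in>UNIV. (if x \<notin> flip x Y then p (flip x Y) else 0)) = (\<Sum>Y\<in>UNIV. (if x \<notin> Y then p Y else 0))"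
          by (rule sum_flip)
        also have "\<dots> = (\<Sum>Y\<in>UNIV. p Y)" by (rule sum.cong) (auto simp: pxz)
        finally show ?thesis using psum True by simp
      next
        case False
        hence iS: "i \<in> S" using i by auto
        have "(\<Sum>Y\<in>UNIV. if i \<in> Y then q Y else 0)
           = (\<Sum>Y\<in>UNIV. (if i \<in> flip x Y then p (flip x Y) else 0))"
          unfolding q_def using False by (intro sum.cong) (auto simp: flip_mem)
        also have "\<dots> = (\<Sum>Y\<in>UNIV. (if i \<in> Y then p Y else 0))" by (rule sum_flip)
        finally show ?thesis using pmarg iS by simp
      qed
      have qe: "q {} = 1 - r x"
        unfolding q_def flip_def using pxz by auto
      show ?thesis
        apply (rule exI[where x=q])
        using q0 qsup qsum qmarg qe ple insert.hyps(2) by auto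
    qed
  qed
qed


lemma parity_ident:
  fixes a :: "'n::finite \<Rightarrow> 'n set"
  shows "dot2 (mat_vec2 a x) s = odd (card {i\<in>x. dot2 (a i) s})"
proof -
  define c where "c j = card {i\<in>x. j \<in> a i}" for j
  have e1: "mat_vec2 a x \<inter> s = {j\<in>s. odd (c j)}"
    unfolding mat_vec2_def c_def by auto
  have "even (card (mat_vec2 a x \<inter> s)) = even (\<Sum>j\<in>s. c j)"
    unfolding e1 by (simp add: even_sum_iff)
  also have "(\<Sum>j\<in>s. c j) = (\<Sum>j\<in>s. \<Sum>i\<in>x. if j \<in> a i then 1 else (0::nat))"
    unfolding c_def by (simp add: sum.If_cases) (intro sum.cong refl arg_cong[where f=card]; auto)
  also have "\<dots> = (\<Sum>i\<in>x. \<Sum>j\<in>s. if j \<in> a i then 1 else (0::nat))"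
    by (rule sum.swap)
  also have "\<dots> = (\<Sum>i\<in>x. card (a i \<inter> s))"
    by (rule sum.cong) (auto simp: sum.If_cases Int_commute)
  also have "even \<dots> = even (card {i\<in>x. dot2 (a i) s})"
    by (simp add: even_sum_iff dot2_def)
  finally show ?thesis unfolding dot2_def by simp
qed

lemma T_bij:
  fixes a :: "'n::finite \<Rightarrow> 'n set"
  assumes "in_GL2 a"
  shows "bij (\<lambda>s. {i. dot2 (a i) s})"
proof -
  have su: "surj (mat_vec2 a)" using assms unfolding in_GL2_def bij_def by simp
  have sg: "dot2 {j} t = (j \<in> t)" for j and t :: "'n set"
    unfolding dot2_def by (cases "j \<in> t") auto
  have "inj (\<lambda>s. {i. dot2 (a i) s})"
  proof (rule injI)
    fix s1 s2 assume h: "{i. dot2 (a i) s1} = {i. dot2 (a i) s2}"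
    have hi: "dot2 (a i) s1 = dot2 (a i) s2" for i
    proof -
      have "i \<in> {i. dot2 (a i) s1} \<longleftrightarrow> i \<in> {i. dot2 (a i) s2}" by (simp only: h)
      thus ?thesis by simp
    qed
    have w: "dot2 (mat_vec2 a x) s1 = dot2 (mat_vec2 a x) s2" for x
      by (simp only: parity_ident hi)
    have v: "dot2 v s1 = dot2 v s2" for v
    proof -
      obtain x where "v = mat_vec2 a x" using surjD[OF su, of v] by blast
      thus ?thesis using w by simp
    qed
    show "s1 = s2"
    proof
      show "s1 \<subseteq> s2"
      proof
        fix j assume "j \<in> s1"
        hence "dot2 {j} s1" by (simp only: sg)
        hence "dot2 {j} s2" by (simp only: v)
        thus "j \<in> s2" by (simp only: sg)
      qed
      show "s2 \<subseteq> s1"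
      proof
        fix j assume "j \<in> s2"
        hence "dot2 {j} s2" by (simp only: sg)
        hence "dot2 {j} s1" by (simp only: v)
        thus "j \<in> s1" by (simp only: sg)
      qed
    qed
  qed
  moreover have "surj (\<lambda>s. {i. dot2 (a i) s})"
    by (rule finite_UNIV_inj_surj[OF _ calculation]) simp
  ultimately show ?thesis unfolding bij_def by (rule conjI)
qed

lemma walsh_bound:
  assumes "is_dist q" shows "-1 \<le> walsh q u \<and> walsh q u \<le> 1"
proof -
  have "walsh q u \<le> (\<Sum>s\<in>UNIV. q s)" unfolding walsh_def
    using assms unfolding is_dist_def by (intro sum_mono) auto
  moreover have "-(\<Sum>s\<in>UNIV. q s) \<le> walsh q u" unfolding walsh_def sum_negf[symmetric]
    using assms unfolding is_dist_def by (intro sum_mono) auto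
  ultimately show ?thesis using assms unfolding is_dist_def by auto
qed

lemma upper:
  assumes "is_dist p" shows "p {} \<le> 1/2 + 1/2 * walsh p u"
proof -
  have "1 + walsh p u = (\<Sum>s\<in>UNIV. (if dot2 u s then 0 else 2) * p s)"
  proof -
    have "1 + walsh p u = (\<Sum>s\<in>UNIV. p s) + (\<Sum>s\<in>UNIV. (if dot2 u s then -1 else 1) * p s)"
      using assms unfolding is_dist_def walsh_def by simp
    also have "\<dots> = (\<Sum>s\<in>UNIV. p s + (if dot2 u s then -1 else 1) * p s)"
      by (simp add: sum.distrib)
    also have "\<dots> = (\<Sum>s\<in>UNIV. (if dot2 u s then 0 else 2) * p s)"
      by (rule sum.cong) auto
    finally show ?thesis .
  qed
  also have "\<dots> \<ge> (\<Sum>s\<in>{{}}. (if dot2 u s then 0 else 2) * p s)"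
    using assms unfolding is_dist_def by (intro sum_mono2) auto
  finally show ?thesis by (simp add: dot2_def)
qed

theorem proposition2:
  fixes a :: "'n::finite \<Rightarrow> 'n set"
    and q :: "'n set \<Rightarrow> real"
  assumes "in_GL2 a"
    and "is_dist q"
  shows "is_max (Fmax_set a (walsh q))
           (1/2 + 1/2 * Min ((\<lambda>i. walsh q (a i)) ` UNIV))"
proof -
  define m where "m i = walsh q (a i)" for i
  define r where "r i = (1 - m i) / 2" for i
  have r01: "0 \<le> r i \<and> r i \<le> 1" for i
    using walsh_bound[OF assms(2), of "a i"] unfolding r_def m_def by auto
  obtain py where p0: "\<forall>Y. 0 \<le> py Y" and psum: "(\<Sum>Y\<in>UNIV. py Y) = 1"
        and pmarg: "\<forall>i\<in>UNIV. (\<Sum>Y\<in>UNIV. if i \<in> Y then py Y else 0) = r i"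
        and ple: "\<forall>i\<in>UNIV. py {} \<le> 1 - r i" and pk: "py {} = 1 \<or> (\<exists>k\<in>UNIV. py {} = 1 - r k)"
    using threshold[of r UNIV, OF r01] by blast
  have "\<exists>k. py {} = 1 - r k"
  proof (cases "py {} = 1")
    case True
    have "r undefined \<le> 0" using ple True by auto
    hence "r undefined = 0" using r01[of undefined] by linarith
    thus ?thesis using True by auto
  next
    case False
    thus ?thesis using pk by auto
  qed
  then obtain k where k: "py {} = 1 - r k" by blast
  have Mk: "Min (m ` UNIV) = m k"
  proof (rule antisym)
    show "Min (m ` UNIV) \<le> m k" by simp
    show "m k \<le> Min (m ` UNIV)" using ple k unfolding r_def by (auto intro: Min.boundedI)
  qed
  define T where "T s = {i. dot2 (a i) s}" for s
  have bT: "bij T" unfolding T_def using T_bij[OF assms(1)] .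
  have sT: "(\<Sum>s\<in>UNIV. g (T s)) = (\<Sum>Y\<in>UNIV. g Y)" for g :: "'n set \<Rightarrow> real"
    using sum.reindex[of T UNIV g] bT unfolding bij_def by simp
  define p where "p s = py (T s)" for s
  have pd: "is_dist p" unfolding is_dist_def p_def using p0 psum sT by auto
  have pw: "walsh p (a i) = m i" for i
  proof -
    have "walsh p (a i) = (\<Sum>s\<in>UNIV. (\<lambda>Y. (if i \<in> Y then -1 else 1) * py Y) (T s))"
      unfolding walsh_def p_def T_def by simp
    also have "\<dots> = (\<Sum>Y\<in>UNIV. (if i \<in> Y then -1 else 1) * py Y)" by (rule sT)
    also have "\<dots> = (\<Sum>Y\<in>UNIV. py Y - 2 * (if i \<in> Y then py Y else 0))"
      by (rule sum.cong) auto
    also have "\<dots> = 1 - 2 * r i" using psum pmarg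
      by (simp add: sum_subtractf sum_distrib_left[symmetric])
    finally show ?thesis unfolding r_def by (simp add: field_simps)
  qed
  have T0: "T {} = {}" unfolding T_def dot2_def by simp
  have "p {} \<in> Fmax_set a (walsh q)"
    unfolding Fmax_set_def using pd pw unfolding m_def by blast
  moreover have "p {} = 1/2 + 1/2 * Min (m ` UNIV)"
    unfolding p_def T0 k Mk r_def by (simp add: field_simps)
  moreover have "x \<le> 1/2 + 1/2 * Min (m ` UNIV)" if xF: "x \<in> Fmax_set a (walsh q)" for x
  proof -
    obtain p' where x: "x = p' {}" and d: "is_dist p'" and w: "\<forall>i. walsh p' (a i) = m i"
      using xF unfolding Fmax_set_def m_def by blast
    have "Min (m ` UNIV) \<in> m ` UNIV" by (rule Min_in) auto
    then obtain j where j: "Min (m ` UNIV) = m j" by blast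
    have "x \<le> 1/2 + 1/2 * walsh p' (a j)" using upper[OF d] x by simp
    thus ?thesis using w j by simp
  qed
  moreover have mm: "(\<lambda>i. walsh q (a i)) = m" by (simp add: m_def fun_eq_iff)
  ultimately show ?thesis unfolding is_max_def mm by auto
qed

end
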